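(* Let $T\in V$ be a target variable. If $\zeta_T=0$ (i.e. $T\notin\Upsilon_i$ for all $i$) and $\Upsilon$ is conservative, then $\bigcup_{i=1}^{n}MB_i(T)=MB(T)$.
   Context: Let $G=(V,E)$ be a DAG (causal Bayesian network) over a finite set $V$ of random variables with joint distribution $P$ satisfying the Markov condition with respect to $G$; causal sufficiency is assumed. For $X\in V$, $pa(X)$ and $ch(X)$ are the parents and children of $X$ in $G$, $sp(X)=\big(\bigcup_{Y\in ch(X)}pa(Y)\big)\setminus\{X\}$ is the set of spouses, and $MB(X)=pa(X)\cup ch(X)\cup sp(X)$ is the Markov blanket. There are $n\ge 1$ intervention experiments; in the $i$-th, the set $\Upsilon_i\subseteq V$ (possibly empty) is manipulated, and $\Upsilon=\{\Upsilon_1,\dots,\Upsilon_n\}$. The post-intervention DAG is $G_i=(V,E_i)$ with $E_i=\{(a,b)\in E: b\notin\Upsilon_i\}$, with distribution $P_i(V)=\prod_{V_j\notin\Upsilon_i}P(V_j\mid pa(V_j))\prod_{V_j\in\Upsilon_i}P_i(V_j)$, and $D_i$ is a dataset drawn from $P_i$. It is assumed that each $P_i$ is faithful to $G_i$ and that conditional independence tests on $D_i$ are reliable (return exactly the conditional independences of $P_i$). $MB_i(T)$ denotes the Markov blanket of $T$ found in $D_i$, i.e. the set of parents, children and spouses of $T$ in $G_i$. $\zeta_T=|\{i:T\in\Upsilon_i\}|$ is the number of experiments in which $T$ is manipulated. $\Upsilon$ is called conservative if for every $V_j\in\bigcup_{i=1}^n\Upsilon_i$ there exists $i$ with $V_j\notin\Upsilon_i$.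 *)

theory Defs
  imports Main
begin

definition is_dag :: "'v set \<Rightarrow> ('v \<times> 'v) set \<Rightarrow> bool" where
  "is_dag V E \<longleftrightarrow> finite V \<and> E \<subseteq> V \<times> V \<and> acyclic E"

definition pa :: "('v \<times> 'v) set \<Rightarrow> 'v \<Rightarrow> 'v set" where
  "pa E x = {a. (a, x) \<in> E}"

definition ch :: "('v \<times> 'v) set \<Rightarrow> 'v \<Rightarrow> 'v set" where
  "ch E x = {b. (x, b) \<in> E}"

definition sp :: "('v \<times> 'v) set \<Rightarrow> 'v \<Rightarrow> 'v set" where
  "sp E x = (\<Union>y\<in>ch E x. pa E y) - {x}"

definition MB :: "('v \<times> 'v) set \<Rightarrow> 'v \<Rightarrow> 'v set" where
  "MB E x = pa E x \<union> ch E x \<union> sp E x"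

definition post_edges :: "('v \<times> 'v) set \<Rightarrow> 'v set \<Rightarrow> ('v \<times> 'v) set" where
  "post_edges E U = {(a, b) \<in> E. b \<notin> U}"

text \<open>Experiments are indexed by 1..n; Ups i is the manipulated set of experiment i.\<close>
definition zeta :: "nat \<Rightarrow> (nat \<Rightarrow> 'v set) \<Rightarrow> 'v \<Rightarrow> nat" where
  "zeta n Ups T = card {i \<in> {1..n}. T \<in> Ups i}"

definition conservative :: "nat \<Rightarrow> (nat \<Rightarrow> 'v set) \<Rightarrow> bool" where
  "conservative n Ups \<longleftrightarrow> (\<forall>v \<in> (\<Union>i\<in>{1..n}. Ups i). \<exists>i\<in>{1..n}. v \<notin> Ups i)"

end

theory Submission
  imports Defs
begin

lemma MB_mono: "E' \<subseteq> E \<Longrightarrow> MB E' T \<subseteq> MB E T"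
  unfolding MB_def pa_def ch_def sp_def by blast

theorem theorem2:
  fixes V :: "'v set" and E :: "('v \<times> 'v) set" and n :: nat
    and Ups :: "nat \<Rightarrow> 'v set" and T :: 'v
  assumes "is_dag V E"
    and "n \<ge> 1"
    and "\<forall>i\<in>{1..n}. Ups i \<subseteq> V"
    and "T \<in> V"
    and "zeta n Ups T = 0"
    and "conservative n Ups"
  shows "(\<Union>i\<in>{1..n}. MB (post_edges E (Ups i)) T) = MB E T"
proof
  show "(\<Union>i\<in>{1..n}. MB (post_edges E (Ups i)) T) \<subseteq> MB E T"
    using MB_mono[of "post_edges E _" E T] unfolding post_edges_def by blast
next
  have noT: "\<forall>i\<in>{1..n}. T \<notin> Ups i"
    using assms(5) unfolding zeta_def by simp
  have pick: "\<exists>i\<in>{1..n}. c \<notin> Ups i" for c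
  proof (cases "\<exists>i\<in>{1..n}. c \<in> Ups i")
    case True
    then show ?thesis using assms(6) unfolding conservative_def by blast
  next
    case False
    then show ?thesis using assms(2) by auto
  qed
  show "MB E T \<subseteq> (\<Union>i\<in>{1..n}. MB (post_edges E (Ups i)) T)"
  proof
    fix x assume x: "x \<in> MB E T"
    show "x \<in> (\<Union>i\<in>{1..n}. MB (post_edges E (Ups i)) T)"
    proof (cases "x \<in> pa E T")
      case True
      hence "x \<in> MB (post_edges E (Ups 1)) T"
        using noT assms(2) unfolding MB_def pa_def post_edges_def by auto
      then show ?thesis using assms(2) by auto
    next
      case False
      then obtain c where c: "(T, c) \<in> E" "x = c \<or> ((x, c) \<in> E \<and> x \<noteq> T)"
        using x unfolding MB_def pa_def ch_def sp_def by blast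
      obtain i where i: "i \<in> {1..n}" "c \<notin> Ups i" using pick by blast
      have "x \<in> MB (post_edges E (Ups i)) T"
        using c i unfolding MB_def pa_def ch_def sp_def post_edges_def by auto
      then show ?thesis using i by auto
    qed
  qed
qed

end
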